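(* For any two metric directed multigraphs $X=(V,E,r,\ell)$ and $X'$, \[d_{\mathrm{GH}}(X,X')\le\tfrac12|E|\,d_{\vec{\mathcal G}}(X,X'),\] where on the left $X$ and $X'$ are viewed as metric spaces.
   Context: A metric directed multigraph (MDM) is $(V,E,r,\ell)$ with $V,E$ finite, $r=(r_1,r_2):E\to V\times V$ (tail, head), $\ell:E\to(0,\infty)$. $d_{\vec{\mathcal G}}(X,X')=\inf_{(f,g)}\sup_{e\in E}|\ell(e)-\ell'(g(e))|$, infimum over pairs of bijections $f:V\to V'$, $g:E\to E'$ with $r'(g(e))=(f(r_1(e)),f(r_2(e)))$, and $=+\infty$ if there is no such pair. An MDM is viewed as a metric space by replacing each edge $e$ by a line segment of length $\ell(e)$ glued at its endpoint vertices, forgetting orientations, with the induced path (length) metric. $d_{\mathrm{GH}}$ is the Gromov–Hausdorff distance. *)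

theory Defs
  imports "HOL-Analysis.Analysis" "HOL-Library.Extended_Nonnegative_Real"
begin

record ('v, 'e) mdm =
  mdm_V    :: "'v set"
  mdm_E    :: "'e set"
  mdm_tail :: "'e \<Rightarrow> 'v"
  mdm_head :: "'e \<Rightarrow> 'v"
  mdm_len  :: "'e \<Rightarrow> real"

definition wf_mdm :: "('v, 'e) mdm \<Rightarrow> bool" where
  "wf_mdm X \<longleftrightarrow> finite (mdm_V X) \<and> finite (mdm_E X) \<and>
     (\<forall>e\<in>mdm_E X. mdm_tail X e \<in> mdm_V X \<and> mdm_head X e \<in> mdm_V X \<and> mdm_len X e > 0)"

text \<open>The distance between MDMs: infimum over isomorphisms (f,g) of the sup-difference of lengths;
  infimum of the empty set is \<open>top\<close> (= +infinity).\<close>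
definition mdm_dist :: "('v, 'e) mdm \<Rightarrow> ('w, 'f) mdm \<Rightarrow> ennreal" where
  "mdm_dist X Y =
     (INF fg \<in> {(f, g). bij_betw f (mdm_V X) (mdm_V Y) \<and> bij_betw g (mdm_E X) (mdm_E Y) \<and>
                 (\<forall>e\<in>mdm_E X. mdm_tail Y (g e) = f (mdm_tail X e) \<and> mdm_head Y (g e) = f (mdm_head X e))}.
        (SUP e\<in>mdm_E X. ennreal \<bar>mdm_len X e - mdm_len Y (snd fg e)\<bar>))"

text \<open>Points of the realisation: vertices, and interior points of edges (edge e, parameter t with
  0 < t < len e, measured from the tail).\<close>
datatype ('v, 'e) gpt = Vtx 'v | EPt 'e real

definition mdm_points :: "('v, 'e) mdm \<Rightarrow> ('v, 'e) gpt set" where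
  "mdm_points X = Vtx ` mdm_V X \<union> {EPt e t | e t. e \<in> mdm_E X \<and> 0 < t \<and> t < mdm_len X e}"

definition on_edge :: "('v, 'e) mdm \<Rightarrow> 'e \<Rightarrow> ('v, 'e) gpt \<Rightarrow> real \<Rightarrow> bool" where
  "on_edge X e p t \<longleftrightarrow> e \<in> mdm_E X \<and>
     ((0 < t \<and> t < mdm_len X e \<and> p = EPt e t) \<or>
      (t = 0 \<and> p = Vtx (mdm_tail X e)) \<or>
      (t = mdm_len X e \<and> p = Vtx (mdm_head X e)))"

inductive chain :: "('v, 'e) mdm \<Rightarrow> ('v, 'e) gpt \<Rightarrow> ('v, 'e) gpt \<Rightarrow> real \<Rightarrow> bool"
  for X where
  chain_refl: "chain X p p 0"
| chain_step: "on_edge X e p s \<Longrightarrow> on_edge X e q t \<Longrightarrow> chain X q r L \<Longrightarrow> chain X p r (\<bar>s - t\<bar> + L)"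

definition mdm_metric :: "('v, 'e) mdm \<Rightarrow> ('v, 'e) gpt \<Rightarrow> ('v, 'e) gpt \<Rightarrow> ennreal" where
  "mdm_metric X p q = (INF L \<in> {L. chain X p q L}. ennreal L)"

definition ext_metric_on :: "'a set \<Rightarrow> ('a \<Rightarrow> 'a \<Rightarrow> ennreal) \<Rightarrow> bool" where
  "ext_metric_on S d \<longleftrightarrow> (\<forall>x\<in>S. \<forall>y\<in>S. d x y = d y x \<and> (d x y = 0 \<longleftrightarrow> x = y) \<and>
                              (\<forall>z\<in>S. d x z \<le> d x y + d y z))"

definition hausdorff_dist :: "('a \<Rightarrow> 'a \<Rightarrow> ennreal) \<Rightarrow> 'a set \<Rightarrow> 'a set \<Rightarrow> ennreal" where
  "hausdorff_dist d A B = max (SUP a\<in>A. INF b\<in>B. d a b) (SUP b\<in>B. INF a\<in>A. d a b)"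

definition GH_dist :: "'a set \<Rightarrow> ('a \<Rightarrow> 'a \<Rightarrow> ennreal) \<Rightarrow> 'b set \<Rightarrow> ('b \<Rightarrow> 'b \<Rightarrow> ennreal) \<Rightarrow> ennreal" where
  "GH_dist A dA B dB =
     (INF d \<in> {d. ext_metric_on (Inl ` A \<union> Inr ` B) d \<and>
                  (\<forall>a\<in>A. \<forall>a'\<in>A. d (Inl a) (Inl a') = dA a a') \<and>
                  (\<forall>b\<in>B. \<forall>b'\<in>B. d (Inr b) (Inr b') = dB b b')}.
        hausdorff_dist d (Inl ` A) (Inr ` B))"

definition mdm_GH :: "('v, 'e) mdm \<Rightarrow> ('w, 'f) mdm \<Rightarrow> ennreal" where
  "mdm_GH X Y = GH_dist (mdm_points X) (mdm_metric X) (mdm_points Y) (mdm_metric Y)"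

end

theory Submission
  imports Defs
begin


lemma le_INF_add:
  fixes x c :: ennreal
  assumes "\<And>i. i \<in> I \<Longrightarrow> x \<le> f i + c"
  shows "x \<le> (INF i\<in>I. f i) + c"
proof (rule ennreal_le_epsilon)
  fix e :: real assume lt: "(INF i\<in>I. f i) + c < top" and e: "0 < e"
  hence "(INF i\<in>I. f i) \<noteq> \<infinity>" by (metis ennreal_add_eq_top infinity_ennreal_def less_top)
  then obtain i where i: "i \<in> I" "f i < (INF i\<in>I. f i) + e"
    using INF_approx_ennreal[OF e refl] by blast
  have "x \<le> f i + c" using assms i by auto
  also have "\<dots> \<le> (INF i\<in>I. f i) + e + c" using i by (intro add_mono) auto
  finally show "x \<le> (INF i\<in>I. f i) + c + ennreal e" by (simp add: ac_simps)
qed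

fun walk :: "('v,'e) mdm \<Rightarrow> ('v,'e) gpt \<Rightarrow> ('e \<times> real \<times> real) list \<Rightarrow> ('v,'e) gpt \<Rightarrow> bool" where
  "walk X p [] q \<longleftrightarrow> p = q"
| "walk X p ((e,s,t)#ws) q \<longleftrightarrow> (\<exists>x. on_edge X e p s \<and> on_edge X e x t \<and> walk X x ws q)"

definition wlen :: "('e \<times> real \<times> real) list \<Rightarrow> real" where
  "wlen ws = sum_list (map (\<lambda>(e,s,t). \<bar>s - t\<bar>) ws)"

definition cov :: "'e \<Rightarrow> ('e \<times> real \<times> real) list \<Rightarrow> real" where
  "cov e ws = sum_list (map (\<lambda>(e',s,t). if e' = e then \<bar>s - t\<bar> else 0) ws)"

lemma wlen_simps[simp]: "wlen [] = 0" "wlen ((e,s,t)#ws) = \<bar>s-t\<bar> + wlen ws"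
  "wlen (as @ bs) = wlen as + wlen bs"
  by (auto simp: wlen_def)

lemma cov_simps[simp]: "cov e [] = 0" "cov e ((e',s,t)#ws) = (if e' = e then \<bar>s-t\<bar> else 0) + cov e ws"
  "cov e (as @ bs) = cov e as + cov e bs"
  by (auto simp: cov_def)

lemma wlen_nonneg: "wlen ws \<ge> 0"
  by (induction ws) auto

lemma cov_nonneg: "cov e ws \<ge> 0"
  by (induction ws) auto

lemma cov_le_wlen: "cov e ws \<le> wlen ws"
  by (induction ws) auto

lemma cov_zero: "\<forall>x\<in>set ws. fst x \<noteq> e \<Longrightarrow> cov e ws = 0"
  by (induction ws) auto

lemma walk_append: "walk X p (as @ bs) q \<longleftrightarrow> (\<exists>y. walk X p as y \<and> walk X y bs q)"
proof (induction as arbitrary: p)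
  case (Cons a as)
  obtain e s t where "a = (e,s,t)" by (cases a) auto
  then show ?case using Cons by auto
qed simp

lemma chain_walk: "chain X p q L \<Longrightarrow> \<exists>ws. walk X p ws q \<and> wlen ws = L"
proof (induction rule: chain.induct)
  case (chain_refl p)
  then show ?case by (intro exI[of _ "[]"]) auto
next
  case (chain_step e p s q t r L)
  then obtain ws where "walk X q ws r" "wlen ws = L" by blast
  then show ?case using chain_step by (intro exI[of _ "(e,s,t)#ws"]) auto
qed

lemma walk_chain: "walk X p ws q \<Longrightarrow> chain X p q (wlen ws)"
proof (induction ws arbitrary: p)
  case (Cons a ws)
  obtain e s t where a: "a = (e,s,t)" by (cases a) auto
  from Cons.prems obtain x where "on_edge X e p s" "on_edge X e x t" "walk X x ws q" using a by auto
  with Cons.IH show ?case using a by (auto intro: chain_step)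
qed (auto intro: chain_refl)

lemma on_edge_range: "wf_mdm X \<Longrightarrow> on_edge X e p s \<Longrightarrow> e \<in> mdm_E X \<and> 0 \<le> s \<and> s \<le> mdm_len X e"
  unfolding on_edge_def wf_mdm_def by force

lemma walk_steps: "wf_mdm X \<Longrightarrow> walk X p ws q \<Longrightarrow> (e,s,t) \<in> set ws \<Longrightarrow>
   e \<in> mdm_E X \<and> 0 \<le> s \<and> s \<le> mdm_len X e \<and> 0 \<le> t \<and> t \<le> mdm_len X e"
proof (induction ws arbitrary: p)
  case (Cons a ws)
  obtain e' s' t' where a: "a = (e',s',t')" by (cases a) auto
  from Cons.prems obtain x where "on_edge X e' p s'" "on_edge X e' x t'" "walk X x ws q" using a by auto
  with Cons.IH[of x] Cons.prems show ?case using a on_edge_range[OF Cons.prems(1)] by auto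
qed simp

lemma reduce_one:
  assumes wf: "wf_mdm X" and w: "walk X p ws q" and eE: "e \<in> mdm_E X"
  shows "\<exists>ws'. walk X p ws' q \<and> wlen ws' \<le> wlen ws \<and> cov e ws' \<le> mdm_len X e \<and>
     (\<forall>e'. e' \<noteq> e \<longrightarrow> cov e' ws' \<le> cov e' ws)"
proof (cases "cov e ws \<le> mdm_len X e")
  case True
  then show ?thesis using w by blast
next
  case False
  have "\<exists>x\<in>set ws. fst x = e"
  proof (rule ccontr)
    assume "\<not> ?thesis"
    hence "cov e ws = 0" by (intro cov_zero) auto
    moreover have "e \<in> mdm_E X \<Longrightarrow> mdm_len X e > 0" using wf by (auto simp: wf_mdm_def)
    ultimately show False using False eE by auto
  qed
  then obtain P x R where ws: "ws = P @ x # R" "fst x = e" "\<forall>y\<in>set P. fst y \<noteq> e"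
    by (auto elim!: split_list_first_propE)
  obtain a a' where x: "x = (e,a,a')" using ws(2) by (cases x) auto
  show ?thesis
  proof (cases "\<exists>y\<in>set R. fst y = e")
    case False
    hence "cov e ws = \<bar>a - a'\<bar>" using ws x cov_zero[of P e] cov_zero[of R e] by auto
    moreover have "\<bar>a - a'\<bar> \<le> mdm_len X e"
      using walk_steps[OF wf w, of e a a'] ws x by auto
    ultimately show ?thesis using \<open>\<not> cov e ws \<le> mdm_len X e\<close> by simp
  next
    case True
    then obtain R1 y Q where R: "R = R1 @ y # Q" "fst y = e" "\<forall>z\<in>set Q. fst z \<noteq> e"
      by (auto elim!: split_list_last_propE)
    obtain b' b where y: "y = (e,b',b)" using R(2) by (cases y) auto
    from w have "walk X p (P @ ((e,a,a') # R1 @ (e,b',b) # Q)) q" using ws x R y by simp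
    then obtain u where u1: "walk X p P u" and u2: "walk X u ((e,a,a') # R1 @ (e,b',b) # Q) q"
      unfolding walk_append by blast
    from u2 obtain x1 where z1: "on_edge X e u a" and "walk X x1 (R1 @ (e,b',b) # Q) q"
      by (simp only: walk.simps) blast
    then obtain z where "walk X z ((e,b',b)#Q) q" unfolding walk_append by blast
    then obtain v where v: "on_edge X e v b" "walk X v Q q" by (simp only: walk.simps) blast
    define ws' where "ws' = P @ (e,a,b) # Q"
    have w': "walk X p ws' q" unfolding ws'_def using u1 z1 v unfolding walk_append by (simp only: walk.simps) blast
    have ab: "\<bar>a - b\<bar> \<le> mdm_len X e"
      using on_edge_range[OF wf z1] on_edge_range[OF wf v(1)] by auto
    have c0: "cov e P = 0" "cov e Q = 0" using ws R cov_zero[of P e] cov_zero[of Q e] by auto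
    have "cov e ws = \<bar>a - a'\<bar> + cov e R1 + \<bar>b' - b\<bar>" using ws x R y c0 by simp
    also have "\<dots> \<le> \<bar>a - a'\<bar> + wlen R1 + \<bar>b' - b\<bar>" using cov_le_wlen[of e R1] by simp
    finally have "wlen ws' \<le> wlen ws" using False ab ws x R y wlen_nonneg[of P] unfolding ws'_def by simp
    moreover have "cov e ws' \<le> mdm_len X e" using ab c0 unfolding ws'_def by simp
    moreover have "\<forall>e'. e' \<noteq> e \<longrightarrow> cov e' ws' \<le> cov e' ws"
      using ws x R y unfolding ws'_def by (simp add: add_increasing cov_nonneg)
    ultimately show ?thesis using w' by blast
  qed
qed

lemma reduce_all:
  assumes wf: "wf_mdm X" and S: "finite S" "S \<subseteq> mdm_E X"
  shows "walk X p ws q \<Longrightarrow> \<exists>ws'. walk X p ws' q \<and> wlen ws' \<le> wlen ws \<and> (\<forall>e\<in>S. cov e ws' \<le> mdm_len X e)"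
  using S
proof (induction S arbitrary: ws rule: finite_induct)
  case empty
  then show ?case by blast
next
  case (insert e S)
  then obtain ws1 where ws1: "walk X p ws1 q" "wlen ws1 \<le> wlen ws" "\<forall>e\<in>S. cov e ws1 \<le> mdm_len X e"
    by blast
  from reduce_one[OF wf ws1(1), of e] insert.prems obtain ws2 where
    ws2: "walk X p ws2 q" "wlen ws2 \<le> wlen ws1" "cov e ws2 \<le> mdm_len X e"
     "\<forall>e'. e' \<noteq> e \<longrightarrow> cov e' ws2 \<le> cov e' ws1" by auto
  show ?case
  proof (intro exI[of _ ws2] conjI ballI)
    fix e' assume "e' \<in> insert e S"
    then show "cov e' ws2 \<le> mdm_len X e'"
      using ws2 ws1 by (cases "e' = e") force+
  qed (use ws1 ws2 in auto)
qed

definition phi :: "('v,'e) mdm \<Rightarrow> ('w,'f) mdm \<Rightarrow> ('v \<Rightarrow> 'w) \<Rightarrow> ('e \<Rightarrow> 'f) \<Rightarrow> ('v,'e) gpt \<Rightarrow> ('w,'f) gpt" where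
  "phi X Y f g p = (case p of Vtx v \<Rightarrow> Vtx (f v) | EPt e t \<Rightarrow> EPt (g e) (t * mdm_len Y (g e) / mdm_len X e))"

definition iso :: "('v,'e) mdm \<Rightarrow> ('w,'f) mdm \<Rightarrow> ('v \<Rightarrow> 'w) \<Rightarrow> ('e \<Rightarrow> 'f) \<Rightarrow> bool" where
  "iso X Y f g \<longleftrightarrow> bij_betw f (mdm_V X) (mdm_V Y) \<and> bij_betw g (mdm_E X) (mdm_E Y) \<and>
     (\<forall>e\<in>mdm_E X. mdm_tail Y (g e) = f (mdm_tail X e) \<and> mdm_head Y (g e) = f (mdm_head X e))"

definition rho :: "('v,'e) mdm \<Rightarrow> ('w,'f) mdm \<Rightarrow> ('e \<Rightarrow> 'f) \<Rightarrow> 'e \<Rightarrow> real" where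
  "rho X Y g e = mdm_len Y (g e) / mdm_len X e"

definition tr :: "('v,'e) mdm \<Rightarrow> ('w,'f) mdm \<Rightarrow> ('e \<Rightarrow> 'f) \<Rightarrow> ('e \<times> real \<times> real) \<Rightarrow> ('f \<times> real \<times> real)" where
  "tr X Y g = (\<lambda>(e,s,t). (g e, s * rho X Y g e, t * rho X Y g e))"

lemma rho_pos:
  assumes "wf_mdm X" "wf_mdm Y" "iso X Y f g" "e \<in> mdm_E X"
  shows "rho X Y g e > 0"
proof -
  have "g e \<in> mdm_E Y" using assms(3,4) unfolding iso_def bij_betw_def by auto
  then show ?thesis using assms unfolding rho_def wf_mdm_def by auto
qed

lemma on_edge_phi:
  assumes wX: "wf_mdm X" and wY: "wf_mdm Y" and i: "iso X Y f g" and oe: "on_edge X e p s"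
  shows "on_edge Y (g e) (phi X Y f g p) (s * rho X Y g e)"
proof -
  have eE: "e \<in> mdm_E X" using oe unfolding on_edge_def by auto
  have gE: "g e \<in> mdm_E Y" using i eE unfolding iso_def bij_betw_def by auto
  have lx: "mdm_len X e > 0" using wX eE unfolding wf_mdm_def by auto
  have ly: "mdm_len Y (g e) > 0" using wY gE unfolding wf_mdm_def by auto
  have th: "mdm_tail Y (g e) = f (mdm_tail X e)" "mdm_head Y (g e) = f (mdm_head X e)"
    using i eE unfolding iso_def by auto
  from oe consider "0 < s" "s < mdm_len X e" "p = EPt e s" | "s = 0" "p = Vtx (mdm_tail X e)"
     | "s = mdm_len X e" "p = Vtx (mdm_head X e)" unfolding on_edge_def by auto
  then show ?thesis
  proof cases
    case 1
    have "s * rho X Y g e < mdm_len Y (g e)"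
      using 1 lx ly by (simp add: rho_def field_simps)
    then show ?thesis using 1 lx ly gE unfolding on_edge_def phi_def rho_def by simp
  next
    case 2
    then show ?thesis using gE th unfolding on_edge_def phi_def by simp
  next
    case 3
    then show ?thesis using gE th lx unfolding on_edge_def phi_def rho_def by simp
  qed
qed

lemma walk_phi:
  assumes wX: "wf_mdm X" and wY: "wf_mdm Y" and i: "iso X Y f g"
  shows "walk X p ws q \<Longrightarrow> walk Y (phi X Y f g p) (map (tr X Y g) ws) (phi X Y f g q)"
proof (induction ws arbitrary: p)
  case (Cons a ws)
  obtain e s t where a: "a = (e,s,t)" by (cases a) auto
  from Cons.prems obtain x where x: "on_edge X e p s" "on_edge X e x t" "walk X x ws q" using a by auto
  show ?case using a Cons.IH[OF x(3)] on_edge_phi[OF wX wY i x(1)] on_edge_phi[OF wX wY i x(2)]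
    by (auto simp: tr_def)
qed simp

lemma wlen_tr:
  assumes wX: "wf_mdm X" and wY: "wf_mdm Y" and i: "iso X Y f g"
  shows "(\<forall>x\<in>set ws. fst x \<in> mdm_E X) \<Longrightarrow>
    wlen (map (tr X Y g) ws) = wlen ws + (\<Sum>e\<in>mdm_E X. (rho X Y g e - 1) * cov e ws)"
proof (induction ws)
  case Nil
  then show ?case by simp
next
  case (Cons a ws)
  obtain e0 s t where a: "a = (e0,s,t)" by (cases a) auto
  have e0: "e0 \<in> mdm_E X" using Cons.prems a by auto
  have r: "rho X Y g e0 > 0" using rho_pos[OF wX wY i e0] .
  have fin: "finite (mdm_E X)" using wX unfolding wf_mdm_def by auto
  have h1: "wlen (map (tr X Y g) (a # ws)) = \<bar>s - t\<bar> * rho X Y g e0 + wlen (map (tr X Y g) ws)"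
    using a r by (simp add: tr_def abs_mult flip: left_diff_distrib)
  have h2: "wlen (map (tr X Y g) ws) = wlen ws + (\<Sum>e\<in>mdm_E X. (rho X Y g e - 1) * cov e ws)"
    using Cons by simp
  have "(\<Sum>e\<in>mdm_E X. (rho X Y g e - 1) * cov e (a # ws)) =
      (\<Sum>e\<in>mdm_E X. (rho X Y g e - 1) * (if e0 = e then \<bar>s-t\<bar> else 0)) + (\<Sum>e\<in>mdm_E X. (rho X Y g e - 1) * cov e ws)"
    using a by (simp add: distrib_left sum.distrib)
  also have "(\<Sum>e\<in>mdm_E X. (rho X Y g e - 1) * (if e0 = e then \<bar>s-t\<bar> else 0)) = (rho X Y g e0 - 1) * \<bar>s-t\<bar>"
    using fin e0 by (simp add: if_distrib sum.delta cong: if_cong)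
  finally show ?case using a h1 h2 by (simp add: algebra_simps)
qed

lemma cov_bound:
  assumes wX: "wf_mdm X" and wY: "wf_mdm Y" and i: "iso X Y f g"
    and c: "\<forall>e\<in>mdm_E X. cov e ws \<le> mdm_len X e"
  shows "(\<Sum>e\<in>mdm_E X. (rho X Y g e - 1) * cov e ws) \<le> (\<Sum>e\<in>mdm_E X. \<bar>mdm_len Y (g e) - mdm_len X e\<bar>)"
proof (rule sum_mono)
  fix e assume e: "e \<in> mdm_E X"
  have lx: "mdm_len X e > 0" using wX e unfolding wf_mdm_def by auto
  have "(rho X Y g e - 1) * cov e ws \<le> \<bar>rho X Y g e - 1\<bar> * cov e ws"
    using cov_nonneg[of e ws] by (intro mult_right_mono) auto
  also have "\<dots> \<le> \<bar>rho X Y g e - 1\<bar> * mdm_len X e"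
    using c e by (intro mult_left_mono) auto
  also have "\<dots> = \<bar>mdm_len Y (g e) - mdm_len X e\<bar>"
    using lx by (simp add: rho_def abs_mult[symmetric] field_simps)
  finally show "(rho X Y g e - 1) * cov e ws \<le> \<bar>mdm_len Y (g e) - mdm_len X e\<bar>" .
qed

lemma chain_nonneg: "chain X p q L \<Longrightarrow> L \<ge> 0"
  by (induction rule: chain.induct) auto

lemma dist_phi:
  assumes wX: "wf_mdm X" and wY: "wf_mdm Y" and i: "iso X Y f g"
  shows "mdm_metric Y (phi X Y f g p) (phi X Y f g q) \<le>
     mdm_metric X p q + ennreal (\<Sum>e\<in>mdm_E X. \<bar>mdm_len Y (g e) - mdm_len X e\<bar>)"
  unfolding mdm_metric_def
proof (rule le_INF_add)
  fix L assume "L \<in> {L. chain X p q L}"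
  then have ch: "chain X p q L" by simp
  have L0: "L \<ge> 0" using chain_nonneg[OF ch] .
  define K where "K = (\<Sum>e\<in>mdm_E X. \<bar>mdm_len Y (g e) - mdm_len X e\<bar>)"
  have K0: "K \<ge> 0" unfolding K_def by (auto intro: sum_nonneg)
  obtain ws where ws: "walk X p ws q" "wlen ws = L" using chain_walk[OF ch] by blast
  have fin: "finite (mdm_E X)" using wX unfolding wf_mdm_def by auto
  obtain ws' where ws': "walk X p ws' q" "wlen ws' \<le> wlen ws" "\<forall>e\<in>mdm_E X. cov e ws' \<le> mdm_len X e"
    using reduce_all[OF wX fin order_refl ws(1)] by blast
  have st: "\<forall>x\<in>set ws'. fst x \<in> mdm_E X"
    using walk_steps[OF wX ws'(1)] by fastforce
  have w2: "walk Y (phi X Y f g p) (map (tr X Y g) ws') (phi X Y f g q)"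
    using walk_phi[OF wX wY i ws'(1)] .
  have "wlen (map (tr X Y g) ws') \<le> L + K"
    using wlen_tr[OF wX wY i st] cov_bound[OF wX wY i ws'(3)] ws ws'(2) unfolding K_def by linarith
  then have "ennreal (wlen (map (tr X Y g) ws')) \<le> ennreal L + ennreal K"
    using L0 K0 by (simp add: ennreal_plus[symmetric] del: ennreal_plus)
  moreover have "(INF L\<in>{L. chain Y (phi X Y f g p) (phi X Y f g q) L}. ennreal L) \<le> ennreal (wlen (map (tr X Y g) ws'))"
    using walk_chain[OF w2] by (intro INF_lower) simp
  ultimately show "(INF L\<in>{L. chain Y (phi X Y f g p) (phi X Y f g q) L}. ennreal L) \<le> ennreal L + ennreal K"
    by (rule order_trans[rotated])
qed



lemma chain_append: "chain X p q L1 \<Longrightarrow> chain X q r L2 \<Longrightarrow> chain X p r (L1 + L2)"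
proof (induction rule: chain.induct)
  case (chain_refl p)
  then show ?case by simp
next
  case (chain_step e p s q t r' L)
  then have "chain X p r (\<bar>s - t\<bar> + (L + L2))" by (intro chain.chain_step) auto
  then show ?case by (simp add: add.assoc)
qed

lemma chain_sym: "chain X p q L \<Longrightarrow> chain X q p L"
proof (induction rule: chain.induct)
  case (chain_refl p)
  then show ?case by (rule chain.chain_refl)
next
  case (chain_step e p s q t r L)
  have "chain X q p (\<bar>t - s\<bar> + 0)" by (rule chain.chain_step[OF chain_step(2) chain_step(1) chain.chain_refl])
  from chain_append[OF chain_step(4) this] show ?case by (simp add: abs_minus_commute add.commute)
qed

lemma lip_chain:
  assumes "\<And>e x s y t. on_edge X e x s \<Longrightarrow> on_edge X e y t \<Longrightarrow> h x \<le> h y + \<bar>s - t\<bar>"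
  shows "chain X p q L \<Longrightarrow> h p \<le> h q + L"
proof (induction rule: chain.induct)
  case (chain_refl p)
  then show ?case by simp
next
  case (chain_step e p s q t r L)
  then show ?case using assms[OF chain_step(1,2)] by linarith
qed

lemma min3_lip:
  fixes a b a' b' c d :: real
  assumes "a \<le> a' + d" "b \<le> b' + d" "0 \<le> d"
  shows "min c (min a b) \<le> min c (min a' b') + d"
  using assms by (simp add: min_def)

lemma separate:
  fixes X :: "('v,'e) mdm"
  assumes wf: "wf_mdm X" and q: "q \<in> mdm_points X" and p: "p \<in> mdm_points X" and pq: "p \<noteq> q"
  shows "\<exists>h. (\<forall>e x s y t. on_edge X e x s \<longrightarrow> on_edge X e y t \<longrightarrow> h x \<le> h y + \<bar>s - t\<bar>) \<and> h q = 0 \<and> h p > 0"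
proof -
  have fin: "finite (mdm_E X)" and pos: "\<And>e. e \<in> mdm_E X \<Longrightarrow> mdm_len X e > 0"
    using wf unfolding wf_mdm_def by auto
  show ?thesis
  proof (cases q)
    case (Vtx w)
    define c where "c = (if mdm_E X = {} then 1 else Min (mdm_len X ` mdm_E X) / 2)"
    have c0: "c > 0" unfolding c_def using fin pos by auto
    have cl: "c \<le> mdm_len X e" if "e \<in> mdm_E X" for e
    proof -
      have "Min (mdm_len X ` mdm_E X) \<le> mdm_len X e" using fin that by auto
      moreover have "Min (mdm_len X ` mdm_E X) > 0" using fin pos that by (subst Min_gr_iff) auto
      ultimately show ?thesis unfolding c_def using that by auto
    qed
    define H where "H e s = min c (min (if mdm_tail X e = w then s else c) (if mdm_head X e = w then mdm_len X e - s else c))" for e s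
    define h where "h x = (case x of Vtx v \<Rightarrow> if v = w then 0 else c | EPt e t \<Rightarrow> H e t)" for x
    have hH: "h x = H e s" if "on_edge X e x s" for e x s
      using that c0 cl[of e] pos[of e] unfolding on_edge_def h_def H_def by auto
    have "h x \<le> h y + \<bar>s - t\<bar>" if "on_edge X e x s" "on_edge X e y t" for e x s y t
      unfolding hH[OF that(1)] hH[OF that(2)] H_def
      by (rule min3_lip) auto
    moreover have "h q = 0" using Vtx unfolding h_def by simp
    moreover have "h p > 0"
      using p pq Vtx c0 unfolding mdm_points_def h_def H_def by (auto split: if_splits)
    ultimately show ?thesis by blast
  next
    case (EPt e0 t0)
    have e0: "e0 \<in> mdm_E X" "0 < t0" "t0 < mdm_len X e0" using q EPt unfolding mdm_points_def by auto
    define c where "c = min t0 (mdm_len X e0 - t0)"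
    have c0: "c > 0" unfolding c_def using e0 by auto
    define H where "H e s = (if e = e0 then min c \<bar>s - t0\<bar> else c)" for e s
    define h where "h x = (case x of Vtx v \<Rightarrow> c | EPt e t \<Rightarrow> H e t)" for x :: "('v,'e) gpt"
    have hH: "h x = H e s" if "on_edge X e x s" for e x s
      using that c0 unfolding on_edge_def h_def H_def c_def by auto
    have "h x \<le> h y + \<bar>s - t\<bar>" if "on_edge X e x s" "on_edge X e y t" for e x s y t
      unfolding hH[OF that(1)] hH[OF that(2)] H_def
      by (auto simp: min_def)
    moreover have "h q = 0" using EPt c0 unfolding h_def H_def by simp
    moreover have "h p > 0"
      using p pq EPt c0 unfolding mdm_points_def h_def H_def by (auto split: if_splits)
    ultimately show ?thesis by blast
  qed
qed

lemma metric_ext: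
  assumes wf: "wf_mdm X"
  shows "ext_metric_on (mdm_points X) (mdm_metric X)"
  unfolding ext_metric_on_def
proof (intro ballI conjI)
  fix x y assume x: "x \<in> mdm_points X" and y: "y \<in> mdm_points X"
  have "{L. chain X x y L} = {L. chain X y x L}" using chain_sym by blast
  then show "mdm_metric X x y = mdm_metric X y x" unfolding mdm_metric_def by simp
  show "(mdm_metric X x y = 0) = (x = y)"
  proof
    assume "x = y"
    then have "mdm_metric X x y \<le> ennreal 0" unfolding mdm_metric_def
      by (intro INF_lower2[of 0]) (auto intro: chain_refl)
    then show "mdm_metric X x y = 0" by simp
  next
    assume z: "mdm_metric X x y = 0"
    show "x = y"
    proof (rule ccontr)
      assume "x \<noteq> y"
      then obtain h where h: "\<And>e x s y t. on_edge X e x s \<Longrightarrow> on_edge X e y t \<Longrightarrow> h x \<le> h y + \<bar>s - t\<bar>"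
        "h y = 0" "h x > 0" using separate[OF wf y x] by blast
      have "ennreal (h x) \<le> mdm_metric X x y" unfolding mdm_metric_def
      proof (rule INF_greatest)
        fix L assume "L \<in> {L. chain X x y L}"
        then have "h x \<le> h y + L"
          apply -
          apply (rule lip_chain[where X=X and h=h])
           apply (rule h(1), assumption, assumption)
          apply simp
          done
        then show "ennreal (h x) \<le> ennreal L" using h(2) by (intro ennreal_leI) simp
      qed
      then show False using z h(3) by simp
    qed
  qed
  fix z
  show "mdm_metric X x z \<le> mdm_metric X x y + mdm_metric X y z"
    unfolding mdm_metric_def
  proof (rule le_INF_add)
    fix L1 assume L1: "L1 \<in> {L. chain X x y L}"
    show "(INF L\<in>{L. chain X x z L}. ennreal L) \<le> ennreal L1 + (INF L\<in>{L. chain X y z L}. ennreal L)"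
      unfolding add.commute[of "ennreal L1"]
    proof (rule le_INF_add)
      fix L2 assume L2: "L2 \<in> {L. chain X y z L}"
      have "chain X x z (L1 + L2)" using chain_append L1 L2 by blast
      moreover have "ennreal (L1 + L2) = ennreal L2 + ennreal L1"
        using chain_nonneg[of X x y L1] chain_nonneg[of X y z L2] L1 L2 by (simp add: ennreal_plus add.commute)
      ultimately show "(INF L\<in>{L. chain X x z L}. ennreal L) \<le> ennreal L2 + ennreal L1"
        by (metis (mono_tags, lifting) INF_lower mem_Collect_eq)
    qed
  qed
qed



lemma le_add_INF:
  fixes x c :: ennreal
  assumes "\<And>i. i \<in> I \<Longrightarrow> x \<le> c + f i"
  shows "x \<le> c + (INF i\<in>I. f i)"
  using le_INF_add[of I x f c] assms by (simp add: add.commute)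

lemma GH_bound:
  fixes dA :: "'a \<Rightarrow> 'a \<Rightarrow> ennreal" and dB :: "'b \<Rightarrow> 'b \<Rightarrow> ennreal" and \<phi> :: "'a \<Rightarrow> 'b"
  assumes mA: "ext_metric_on A dA" and mB: "ext_metric_on B dB" and im: "\<phi> ` A = B" and K0: "K \<ge> 0"
    and d1: "\<And>a a'. a \<in> A \<Longrightarrow> a' \<in> A \<Longrightarrow> dB (\<phi> a) (\<phi> a') \<le> dA a a' + ennreal K"
    and d2: "\<And>a a'. a \<in> A \<Longrightarrow> a' \<in> A \<Longrightarrow> dA a a' \<le> dB (\<phi> a) (\<phi> a') + ennreal K"
  shows "GH_dist A dA B dB \<le> ennreal (K/2)"
proof (rule ennreal_le_epsilon)
  fix \<epsilon> :: real assume "ennreal (K/2) < top" and \<epsilon>: "0 < \<epsilon>"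
  define r where "r = K/2 + \<epsilon>"
  have r0: "r > 0" unfolding r_def using K0 \<epsilon> by simp
  have Kr: "ennreal K \<le> ennreal r + ennreal r"
    using K0 r0 \<epsilon> by (simp add: r_def ennreal_plus[symmetric] del: ennreal_plus)
  have symA: "dA a a' = dA a' a" if "a \<in> A" "a' \<in> A" for a a' using mA that unfolding ext_metric_on_def by blast
  have zA: "dA a a = 0" if "a \<in> A" for a using mA that unfolding ext_metric_on_def by blast
  have triA: "dA a c \<le> dA a b + dA b c" if "a \<in> A" "b \<in> A" "c \<in> A" for a b c
    using mA that unfolding ext_metric_on_def by blast
  have symB: "dB a a' = dB a' a" if "a \<in> B" "a' \<in> B" for a a' using mB that unfolding ext_metric_on_def by blast
  have zB: "dB a a = 0" if "a \<in> B" for a using mB that unfolding ext_metric_on_def by blast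
  have triB: "dB a c \<le> dB a b + dB b c" if "a \<in> B" "b \<in> B" "c \<in> B" for a b c
    using mB that unfolding ext_metric_on_def by blast
  have phiB: "\<phi> a \<in> B" if "a \<in> A" for a using im that by auto
  define cr where "cr a b = (INF a'\<in>A. dA a a' + ennreal r + dB (\<phi> a') b)" for a b
  have cr_pos: "ennreal r \<le> cr a b" for a b
    unfolding cr_def by (rule INF_greatest) (simp add: add_increasing add_increasing2)
  have cr_self: "cr a (\<phi> a) \<le> ennreal r" if "a \<in> A" for a
    unfolding cr_def using that zA[OF that] zB[OF phiB[OF that]] by (intro INF_lower2[of a]) auto
  have T1: "cr a b \<le> dA a a2 + cr a2 b" if "a \<in> A" "a2 \<in> A" "b \<in> B" for a a2 b
    unfolding cr_def[of a2]
  proof (rule le_add_INF)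
    fix a' assume a': "a' \<in> A"
    have "cr a b \<le> dA a a' + ennreal r + dB (\<phi> a') b" unfolding cr_def using a' by (rule INF_lower)
    also have "\<dots> \<le> (dA a a2 + dA a2 a') + ennreal r + dB (\<phi> a') b"
      using triA[OF that(1,2) a'] by (intro add_right_mono)
    finally show "cr a b \<le> dA a a2 + (dA a2 a' + ennreal r + dB (\<phi> a') b)" by (simp add: ac_simps)
  qed
  have T2: "cr a b2 \<le> cr a b + dB b b2" if "a \<in> A" "b \<in> B" "b2 \<in> B" for a b b2
    unfolding cr_def[of a b]
  proof (rule le_INF_add)
    fix a' assume a': "a' \<in> A"
    have "cr a b2 \<le> dA a a' + ennreal r + dB (\<phi> a') b2" unfolding cr_def using a' by (rule INF_lower)
    also have "\<dots> \<le> dA a a' + ennreal r + (dB (\<phi> a') b + dB b b2)"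
      using triB[OF phiB[OF a'] that(2,3)] by (intro add_left_mono)
    finally show "cr a b2 \<le> dA a a' + ennreal r + dB (\<phi> a') b + dB b b2" by (simp add: ac_simps)
  qed
  have T5: "dA a a2 \<le> cr a b + cr a2 b" if "a \<in> A" "a2 \<in> A" "b \<in> B" for a a2 b
    unfolding cr_def[of a b]
  proof (rule le_INF_add)
    fix a' assume a': "a' \<in> A"
    show "dA a a2 \<le> dA a a' + ennreal r + dB (\<phi> a') b + cr a2 b"
      unfolding cr_def[of a2 b]
    proof (rule le_add_INF)
      fix a'' assume a'': "a'' \<in> A"
      have "dA a a2 \<le> dA a a' + dA a' a2" using triA that a' by blast
      also have "\<dots> \<le> dA a a' + (dA a' a'' + dA a'' a2)" using triA that a' a'' by (intro add_left_mono) blast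
      also have "dA a' a'' \<le> dB (\<phi> a') (\<phi> a'') + ennreal K" using d2 a' a'' by blast
      also have "dB (\<phi> a') (\<phi> a'') \<le> dB (\<phi> a') b + dB b (\<phi> a'')" using triB phiB a' a'' that by blast
      also have "ennreal K \<le> ennreal r + ennreal r" by (rule Kr)
      also have "dA a'' a2 = dA a2 a''" using symA a'' that by blast
      also have "dB b (\<phi> a'') = dB (\<phi> a'') b" using symB phiB a'' that by blast
      finally show "dA a a2 \<le> dA a a' + ennreal r + dB (\<phi> a') b + (dA a2 a'' + ennreal r + dB (\<phi> a'') b)"
        by (simp add: ac_simps add_mono)
    qed
  qed
  have T6: "dB b b2 \<le> cr a b + cr a b2" if "a \<in> A" "b \<in> B" "b2 \<in> B" for a b b2
    unfolding cr_def[of a b]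
  proof (rule le_INF_add)
    fix a' assume a': "a' \<in> A"
    show "dB b b2 \<le> dA a a' + ennreal r + dB (\<phi> a') b + cr a b2"
      unfolding cr_def[of a b2]
    proof (rule le_add_INF)
      fix a'' assume a'': "a'' \<in> A"
      have "dB b b2 \<le> dB b (\<phi> a') + dB (\<phi> a') b2" using triB that a' phiB by blast
      also have "\<dots> \<le> dB b (\<phi> a') + (dB (\<phi> a') (\<phi> a'') + dB (\<phi> a'') b2)"
        using triB that a' a'' phiB by (intro add_left_mono) blast
      also have "dB (\<phi> a') (\<phi> a'') \<le> dA a' a'' + ennreal K" using d1 a' a'' by blast
      also have "dA a' a'' \<le> dA a' a + dA a a''" using triA a' a'' that by blast
      also have "ennreal K \<le> ennreal r + ennreal r" by (rule Kr)
      also have "dA a' a = dA a a'" using symA a' that by blast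
      also have "dB b (\<phi> a') = dB (\<phi> a') b" using symB phiB a' that by blast
      finally show "dB b b2 \<le> dA a a' + ennreal r + dB (\<phi> a') b + (dA a a'' + ennreal r + dB (\<phi> a'') b2)"
        by (simp add: ac_simps add_mono)
    qed
  qed
  have T3: "cr a2 b \<le> cr a b + dA a a2" if "a \<in> A" "a2 \<in> A" "b \<in> B" for a a2 b
    using T1[OF that(2,1,3)] symA[OF that(1,2)] by (simp add: add.commute)
  have T4: "cr a b \<le> dB b b2 + cr a b2" if "a \<in> A" "b \<in> B" "b2 \<in> B" for a b b2
    using T2[OF that(1,3,2)] symB[OF that(2,3)] by (simp add: add.commute)
  define d where "d x y = (case x of Inl a \<Rightarrow> (case y of Inl a' \<Rightarrow> dA a a' | Inr b \<Rightarrow> cr a b)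
      | Inr b \<Rightarrow> (case y of Inl a \<Rightarrow> cr a b | Inr b' \<Rightarrow> dB b b'))" for x y
  have dmet: "ext_metric_on (Inl ` A \<union> Inr ` B) d"
    unfolding ext_metric_on_def
  proof (intro ballI conjI)
    fix x y assume x: "x \<in> Inl ` A \<union> Inr ` B" and y: "y \<in> Inl ` A \<union> Inr ` B"
    show "d x y = d y x" using x y symA symB unfolding d_def by auto
    have crn: "cr a b \<noteq> 0" for a b using cr_pos[of a b] r0
      by (metis ennreal_eq_0_iff le_zero_eq linorder_not_le)
    show "(d x y = 0) = (x = y)" using x y zA zB crn unfolding d_def
      by (auto simp: ext_metric_on_def) (use mA mB in \<open>auto simp: ext_metric_on_def\<close>)
    fix z assume z: "z \<in> Inl ` A \<union> Inr ` B"
    show "d x z \<le> d x y + d y z"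
      using x y z
    proof (elim UnE imageE)
      fix a1 a2 a3 assume "a1 \<in> A" "x = Inl a1" "a2 \<in> A" "y = Inl a2" "a3 \<in> A" "z = Inl a3"
      then show ?thesis unfolding d_def using triA by simp
    qed (auto simp: d_def intro: T1 T2 T3 T4 T5 T6 triA triB)
  qed
  have "GH_dist A dA B dB \<le> hausdorff_dist d (Inl ` A) (Inr ` B)"
    unfolding GH_dist_def by (rule INF_lower) (auto simp: dmet d_def)
  also have "\<dots> \<le> ennreal r"
    unfolding hausdorff_dist_def
  proof (rule max.boundedI)
    show "(SUP a\<in>Inl ` A. INF b\<in>Inr ` B. d a b) \<le> ennreal r"
    proof (rule SUP_least)
      fix x :: "'a + 'b" assume "x \<in> Inl ` A"
      then obtain a where a: "a \<in> A" "x = Inl a" by auto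
      have "(INF b\<in>Inr ` B. d x b) \<le> d x (Inr (\<phi> a))" using phiB[OF a(1)] by (intro INF_lower) auto
      also have "\<dots> \<le> ennreal r" using cr_self[OF a(1)] a unfolding d_def by simp
      finally show "(INF b\<in>Inr ` B. d x b) \<le> ennreal r" .
    qed
    show "(SUP b\<in>Inr ` B. INF a\<in>Inl ` A. d a b) \<le> ennreal r"
    proof (rule SUP_least)
      fix y :: "'a + 'b" assume "y \<in> Inr ` B"
      then obtain a where a: "a \<in> A" "y = Inr (\<phi> a)" using im by auto
      have "(INF x\<in>Inl ` A. d x y) \<le> d (Inl a) y" using a(1) by (intro INF_lower) auto
      also have "\<dots> \<le> ennreal r" using cr_self[OF a(1)] a unfolding d_def by simp
      finally show "(INF x\<in>Inl ` A. d x y) \<le> ennreal r" .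
    qed
  qed
  also have "ennreal r = ennreal (K/2) + ennreal \<epsilon>"
    unfolding r_def using K0 \<epsilon> by (simp add: ennreal_plus)
  finally show "GH_dist A dA B dB \<le> ennreal (K/2) + ennreal \<epsilon>" .
qed


lemma iso_inv:
  assumes wX: "wf_mdm X" and i: "iso X Y f g"
  shows "iso Y X (inv_into (mdm_V X) f) (inv_into (mdm_E X) g)"
proof -
  have bf: "bij_betw f (mdm_V X) (mdm_V Y)" and bg: "bij_betw g (mdm_E X) (mdm_E Y)"
    and c: "\<forall>e\<in>mdm_E X. mdm_tail Y (g e) = f (mdm_tail X e) \<and> mdm_head Y (g e) = f (mdm_head X e)"
    using i unfolding iso_def by auto
  have "mdm_tail X (inv_into (mdm_E X) g e') = inv_into (mdm_V X) f (mdm_tail Y e') \<and>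
        mdm_head X (inv_into (mdm_E X) g e') = inv_into (mdm_V X) f (mdm_head Y e')"
    if e': "e' \<in> mdm_E Y" for e'
  proof -
    define e where "e = inv_into (mdm_E X) g e'"
    have e: "e \<in> mdm_E X" "g e = e'" unfolding e_def using bg e'
      by (auto simp: bij_betw_def inv_into_into f_inv_into_f)
    have tv: "mdm_tail X e \<in> mdm_V X" "mdm_head X e \<in> mdm_V X" using wX e unfolding wf_mdm_def by auto
    have inj: "inj_on f (mdm_V X)" using bf unfolding bij_betw_def by auto
    show ?thesis using c e tv inv_into_f_f[OF inj] unfolding e_def[symmetric] by metis
  qed
  then show ?thesis unfolding iso_def using bij_betw_inv_into[OF bf] bij_betw_inv_into[OF bg] by auto
qed

lemma phi_inv:
  assumes wX: "wf_mdm X" and wY: "wf_mdm Y" and i: "iso X Y f g" and p: "p \<in> mdm_points X"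
  shows "phi Y X (inv_into (mdm_V X) f) (inv_into (mdm_E X) g) (phi X Y f g p) = p"
proof -
  have bf: "bij_betw f (mdm_V X) (mdm_V Y)" and bg: "bij_betw g (mdm_E X) (mdm_E Y)"
    using i unfolding iso_def by auto
  have injf: "inj_on f (mdm_V X)" and injg: "inj_on g (mdm_E X)" using bf bg unfolding bij_betw_def by auto
  from p show ?thesis
  proof (cases p)
    case (Vtx v)
    then show ?thesis using p injf unfolding mdm_points_def phi_def by auto
  next
    case (EPt e t)
    then have e: "e \<in> mdm_E X" using p unfolding mdm_points_def by auto
    have ge: "g e \<in> mdm_E Y" using bg e unfolding bij_betw_def by auto
    have l1: "mdm_len X e > 0" using wX e unfolding wf_mdm_def by auto
    have l2: "mdm_len Y (g e) > 0" using wY ge unfolding wf_mdm_def by auto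
    show ?thesis using EPt injg e l1 l2 unfolding phi_def by (simp add: inv_into_f_f field_simps)
  qed
qed

lemma phi_points:
  assumes wX: "wf_mdm X" and wY: "wf_mdm Y" and i: "iso X Y f g" and p: "p \<in> mdm_points X"
  shows "phi X Y f g p \<in> mdm_points Y"
proof -
  have bf: "bij_betw f (mdm_V X) (mdm_V Y)" and bg: "bij_betw g (mdm_E X) (mdm_E Y)"
    using i unfolding iso_def by auto
  from p show ?thesis
  proof (cases p)
    case (Vtx v)
    then show ?thesis using p bf unfolding mdm_points_def phi_def bij_betw_def by auto
  next
    case (EPt e t)
    then have e: "e \<in> mdm_E X" "0 < t" "t < mdm_len X e" using p unfolding mdm_points_def by auto
    have ge: "g e \<in> mdm_E Y" using bg e unfolding bij_betw_def by auto
    have l1: "mdm_len X e > 0" using wX e unfolding wf_mdm_def by auto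
    have l2: "mdm_len Y (g e) > 0" using wY ge unfolding wf_mdm_def by auto
    have "t * mdm_len Y (g e) / mdm_len X e < mdm_len Y (g e)" using e l1 l2 by (simp add: field_simps)
    then show ?thesis using EPt ge e l1 l2 unfolding phi_def mdm_points_def by auto
  qed
qed

lemma phi_image:
  assumes wX: "wf_mdm X" and wY: "wf_mdm Y" and i: "iso X Y f g"
  shows "phi X Y f g ` mdm_points X = mdm_points Y"
proof
  show "phi X Y f g ` mdm_points X \<subseteq> mdm_points Y" using phi_points[OF wX wY i] by auto
  show "mdm_points Y \<subseteq> phi X Y f g ` mdm_points X"
  proof
    fix q assume q: "q \<in> mdm_points Y"
    define p where "p = phi Y X (inv_into (mdm_V X) f) (inv_into (mdm_E X) g) q"
    have i': "iso Y X (inv_into (mdm_V X) f) (inv_into (mdm_E X) g)" using iso_inv[OF wX i] .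
    have pX: "p \<in> mdm_points X" unfolding p_def using phi_points[OF wY wX i' q] .
    have bf: "bij_betw f (mdm_V X) (mdm_V Y)" and bg: "bij_betw g (mdm_E X) (mdm_E Y)"
      using i unfolding iso_def by auto
    have "phi X Y f g p = q"
    proof (cases q)
      case (Vtx v)
      then show ?thesis using q bf unfolding p_def mdm_points_def phi_def
        by (auto simp: bij_betw_def f_inv_into_f)
    next
      case (EPt e' t)
      then have e': "e' \<in> mdm_E Y" using q unfolding mdm_points_def by auto
      define e where "e = inv_into (mdm_E X) g e'"
      have e: "e \<in> mdm_E X" "g e = e'" unfolding e_def using bg e'
        by (auto simp: bij_betw_def inv_into_into f_inv_into_f)
      have l1: "mdm_len X e > 0" using wX e unfolding wf_mdm_def by auto
      have l2: "mdm_len Y e' > 0" using wY e' unfolding wf_mdm_def by auto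
      have ie: "inv_into (mdm_E X) g e' = e" by (simp add: e_def)
      show ?thesis using EPt e l1 l2 unfolding p_def phi_def by (simp add: ie field_simps)
    qed
    then show "q \<in> phi X Y f g ` mdm_points X" using pX by blast
  qed
qed

lemma main_iso:
  assumes wX: "wf_mdm X" and wY: "wf_mdm Y" and i: "iso X Y f g"
  shows "mdm_GH X Y \<le> ennreal ((\<Sum>e\<in>mdm_E X. \<bar>mdm_len Y (g e) - mdm_len X e\<bar>) / 2)"
proof -
  define K where "K = (\<Sum>e\<in>mdm_E X. \<bar>mdm_len Y (g e) - mdm_len X e\<bar>)"
  define f' where "f' = inv_into (mdm_V X) f"
  define g' where "g' = inv_into (mdm_E X) g"
  have i': "iso Y X f' g'" unfolding f'_def g'_def using iso_inv[OF wX i] .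
  have bg: "bij_betw g (mdm_E X) (mdm_E Y)" using i unfolding iso_def by auto
  have K': "(\<Sum>e\<in>mdm_E Y. \<bar>mdm_len X (g' e) - mdm_len Y e\<bar>) = K"
  proof -
    have "(\<Sum>e\<in>mdm_E Y. \<bar>mdm_len X (g' e) - mdm_len Y e\<bar>) = (\<Sum>e\<in>mdm_E X. \<bar>mdm_len X (g' (g e)) - mdm_len Y (g e)\<bar>)"
      using sum.reindex_bij_betw[OF bg, of "\<lambda>e. \<bar>mdm_len X (g' e) - mdm_len Y e\<bar>"] by simp
    also have "\<dots> = K" unfolding K_def g'_def using bg
      by (intro sum.cong) (auto simp: bij_betw_def inv_into_f_f abs_minus_commute)
    finally show ?thesis .
  qed
  have K0: "K \<ge> 0" unfolding K_def by (auto intro: sum_nonneg)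
  show ?thesis unfolding mdm_GH_def K_def[symmetric]
  proof (rule GH_bound[OF metric_ext[OF wX] metric_ext[OF wY] phi_image[OF wX wY i] K0])
    fix a a' assume a: "a \<in> mdm_points X" "a' \<in> mdm_points X"
    show "mdm_metric Y (phi X Y f g a) (phi X Y f g a') \<le> mdm_metric X a a' + ennreal K"
      unfolding K_def by (rule dist_phi[OF wX wY i])
    have "mdm_metric X a a' = mdm_metric X (phi Y X f' g' (phi X Y f g a)) (phi Y X f' g' (phi X Y f g a'))"
      using phi_inv[OF wX wY i] a unfolding f'_def g'_def by simp
    also have "\<dots> \<le> mdm_metric Y (phi X Y f g a) (phi X Y f g a') + ennreal K"
      using dist_phi[OF wY wX i'] K' by simp
    finally show "mdm_metric X a a' \<le> mdm_metric Y (phi X Y f g a) (phi X Y f g a') + ennreal K" .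
  qed
qed

lemma main_iso2:
  assumes wX: "wf_mdm X" and wY: "wf_mdm Y" and i: "iso X Y f g"
  shows "mdm_GH X Y \<le> ennreal (real (card (mdm_E X)) / 2) * (SUP e\<in>mdm_E X. ennreal \<bar>mdm_len X e - mdm_len Y (g e)\<bar>)"
proof -
  define D where "D = (if mdm_E X = {} then 0 else Max ((\<lambda>e. \<bar>mdm_len X e - mdm_len Y (g e)\<bar>) ` mdm_E X))"
  have fin: "finite (mdm_E X)" using wX unfolding wf_mdm_def by auto
  have D0: "D \<ge> 0" unfolding D_def using fin by (auto simp: Max_ge_iff)
  have Dge: "\<bar>mdm_len X e - mdm_len Y (g e)\<bar> \<le> D" if "e \<in> mdm_E X" for e
    unfolding D_def using fin that by auto
  have DS: "ennreal D \<le> (SUP e\<in>mdm_E X. ennreal \<bar>mdm_len X e - mdm_len Y (g e)\<bar>)"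
  proof (cases "mdm_E X = {}")
    case True then show ?thesis unfolding D_def by simp
  next
    case False
    have "Max ((\<lambda>e. \<bar>mdm_len X e - mdm_len Y (g e)\<bar>) ` mdm_E X) \<in> (\<lambda>e. \<bar>mdm_len X e - mdm_len Y (g e)\<bar>) ` mdm_E X"
      by (rule Max_in) (use fin False in auto)
    then obtain e where e: "e \<in> mdm_E X" "D = \<bar>mdm_len X e - mdm_len Y (g e)\<bar>"
      unfolding D_def using False by auto
    then show ?thesis by (intro SUP_upper2[OF e(1)]) simp
  qed
  have "(\<Sum>e\<in>mdm_E X. \<bar>mdm_len Y (g e) - mdm_len X e\<bar>) \<le> (\<Sum>e\<in>mdm_E X. D)"
    using Dge by (intro sum_mono) (simp add: abs_minus_commute)
  then have "(\<Sum>e\<in>mdm_E X. \<bar>mdm_len Y (g e) - mdm_len X e\<bar>) / 2 \<le> real (card (mdm_E X)) / 2 * D" by simp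
  then have "mdm_GH X Y \<le> ennreal (real (card (mdm_E X)) / 2 * D)"
    using main_iso[OF wX wY i] by (meson ennreal_leI order_trans)
  also have "\<dots> = ennreal (real (card (mdm_E X)) / 2) * ennreal D" using D0 by (subst ennreal_mult) auto
  also have "\<dots> \<le> ennreal (real (card (mdm_E X)) / 2) * (SUP e\<in>mdm_E X. ennreal \<bar>mdm_len X e - mdm_len Y (g e)\<bar>)"
    using DS by (intro mult_left_mono) auto
  finally show ?thesis .
qed

theorem lemma5p1:
  fixes X :: "('v, 'e) mdm" and X' :: "('w, 'f) mdm"
  assumes "wf_mdm X" and "wf_mdm X'"
  shows "mdm_GH X X' \<le>
    (if mdm_dist X X' = top then top else ennreal (real (card (mdm_E X)) / 2) * mdm_dist X X')"
proof (cases "mdm_dist X X' = top")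
  case True then show ?thesis by simp
next
  case False
  define c where "c = real (card (mdm_E X)) / 2"
  have c0: "c \<ge> 0" unfolding c_def by simp
  define S where "S = {(f, g). bij_betw f (mdm_V X) (mdm_V X') \<and> bij_betw g (mdm_E X) (mdm_E X') \<and>
                 (\<forall>e\<in>mdm_E X. mdm_tail X' (g e) = f (mdm_tail X e) \<and> mdm_head X' (g e) = f (mdm_head X e))}"
  define F where "F fg = (SUP e\<in>mdm_E X. ennreal \<bar>mdm_len X e - mdm_len X' (snd fg e)\<bar>)" for fg :: "('v \<Rightarrow> 'w) \<times> ('e \<Rightarrow> 'f)"
  have md: "mdm_dist X X' = (INF fg\<in>S. F fg)" unfolding mdm_dist_def S_def F_def ..
  have bnd: "mdm_GH X X' \<le> ennreal c * F fg" if "fg \<in> S" for fg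
  proof -
    obtain f g where fg: "fg = (f, g)" by (cases fg)
    have "iso X X' f g" using that unfolding S_def fg iso_def by auto
    from main_iso2[OF assms this] show ?thesis unfolding F_def fg c_def by simp
  qed
  have "mdm_GH X X' \<le> ennreal c * mdm_dist X X'"
  proof (rule ennreal_le_epsilon)
    fix \<delta> :: real assume "ennreal c * mdm_dist X X' < top" and \<delta>: "0 < \<delta>"
    define \<epsilon> where "\<epsilon> = \<delta> / (c + 1)"
    have \<epsilon>: "\<epsilon> > 0" unfolding \<epsilon>_def using \<delta> c0 by simp
    obtain fg where fg: "fg \<in> S" "F fg < mdm_dist X X' + ennreal \<epsilon>"
      using INF_approx_ennreal[OF \<epsilon> md] False by auto
    have "mdm_GH X X' \<le> ennreal c * F fg" using bnd[OF fg(1)] .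
    also have "\<dots> \<le> ennreal c * (mdm_dist X X' + ennreal \<epsilon>)" using fg(2) by (intro mult_left_mono) auto
    also have "\<dots> = ennreal c * mdm_dist X X' + ennreal (c * \<epsilon>)"
      using c0 \<epsilon> by (simp add: distrib_left ennreal_mult)
    also have "c * \<epsilon> \<le> \<delta>" unfolding \<epsilon>_def using c0 \<delta> by (simp add: field_simps)
    then have "ennreal (c * \<epsilon>) \<le> ennreal \<delta>" by (rule ennreal_leI)
    finally show "mdm_GH X X' \<le> ennreal c * mdm_dist X X' + ennreal \<delta>" by (simp add: add_left_mono)
  qed
  then show ?thesis using False unfolding c_def by simp
qed

end
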